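(* Let $\mathbb{F}$ be a field, let $n\ge 1$, and let $B$ be a nonzero matrix in $M_n(\mathbb{F})$. Then $B$ is strongly independent over $\mathbb{F}$ if and only if the characteristic polynomial $P_B(t)=\det(tI_n-B)$ is irreducible in $\mathbb{F}[t]$.
   Context: An $n$-tuple $(B_1,\dots,B_n)$ of matrices in $M_n(\mathbb{F})$ is called strongly independent over $\mathbb{F}$ if for every nonzero column vector $v\in\mathbb{F}^{n\times 1}$, the vectors $B_1v,\dots,B_nv$ are linearly independent over $\mathbb{F}$. A nonzero matrix $B\in M_n(\mathbb{F})$ is called strongly independent over $\mathbb{F}$ if the $n$-tuple $(I_n,B,B^2,\dots,B^{n-1})$ is strongly independent over $\mathbb{F}$. *)

theory Defs
  imports "Jordan_Normal_Form.Char_Poly"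
begin

text \<open>An n-tuple (B_0,...,B_{n-1}) of n x n matrices is strongly independent if for every
  nonzero v in F^n the vectors B_0 v, ..., B_{n-1} v are linearly independent
  (as a family: only the trivial linear combination vanishes).\<close>
definition strongly_independent_tuple :: "nat \<Rightarrow> (nat \<Rightarrow> 'a::field mat) \<Rightarrow> bool" where
  "strongly_independent_tuple n Bs \<longleftrightarrow>
     (\<forall>v \<in> carrier_vec n. v \<noteq> 0\<^sub>v n \<longrightarrow>
        (\<forall>c :: nat \<Rightarrow> 'a.
           (\<forall>j<n. (\<Sum>i<n. c i * (Bs i *\<^sub>v v) $ j) = 0) \<longrightarrow> (\<forall>i<n. c i = 0)))"

text \<open>A nonzero n x n matrix B is strongly independent if (I, B, ..., B^(n-1)) is.\<close>
definition strongly_independent_mat :: "nat \<Rightarrow> 'a::field mat \<Rightarrow> bool" where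
  "strongly_independent_mat n B \<longleftrightarrow>
     B \<noteq> 0\<^sub>m n n \<and> strongly_independent_tuple n (\<lambda>i. B ^\<^sub>m i)"

end

theory Submission
  imports Defs
begin
primrec hor :: "nat \<Rightarrow> 'a::field mat \<Rightarrow> 'a list \<Rightarrow> 'a vec \<Rightarrow> 'a vec" where
  "hor n B [] v = 0\<^sub>v n"
| "hor n B (a # as) v = a \<cdot>\<^sub>v v + B *\<^sub>v hor n B as v"

definition mvv :: "nat \<Rightarrow> 'a::field mat \<Rightarrow> 'a poly \<Rightarrow> 'a vec \<Rightarrow> 'a vec" where
  "mvv n B p v = hor n B (coeffs p) v"

lemma hor_carrier: "B \<in> carrier_mat n n \<Longrightarrow> v \<in> carrier_vec n \<Longrightarrow> hor n B xs v \<in> carrier_vec n"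
  by (induction xs) auto

lemma mvv_carrier[simp]: "B \<in> carrier_mat n n \<Longrightarrow> v \<in> carrier_vec n \<Longrightarrow> mvv n B p v \<in> carrier_vec n"
  unfolding mvv_def by (rule hor_carrier)

lemma mvv_0[simp]: "mvv n B 0 v = 0\<^sub>v n"
  unfolding mvv_def by simp

lemma mvv_pCons: assumes "B \<in> carrier_mat n n" "v \<in> carrier_vec n"
  shows "mvv n B (pCons a p) v = a \<cdot>\<^sub>v v + B *\<^sub>v mvv n B p v"
proof (cases "a = 0 \<and> p = 0")
  case True
  then show ?thesis using assms by (auto simp: mvv_def)
next
  case False
  then have "coeffs (pCons a p) = a # coeffs p" by auto
  then show ?thesis by (simp add: mvv_def)
qed

lemma mvv_zero_vec: assumes "B \<in> carrier_mat n n" shows "mvv n B p (0\<^sub>v n) = 0\<^sub>v n"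
  by (induction p rule: pCons_induct) (use assms in \<open>auto simp: mvv_pCons\<close>)

lemma mvv_add: assumes B: "B \<in> carrier_mat n n" and v: "v \<in> carrier_vec n"
  shows "mvv n B (p + q) v = mvv n B p v + mvv n B q v"
proof (induction p arbitrary: q rule: pCons_induct)
  case 0
  then show ?case using B v by simp
next
  case (pCons a p)
  obtain b q' where q: "q = pCons b q'" by (cases q)
  have "mvv n B (pCons a p + q) v = (a + b) \<cdot>\<^sub>v v + B *\<^sub>v (mvv n B p v + mvv n B q' v)"
    using pCons.IH q B v by (simp add: mvv_pCons)
  also have "\<dots> = mvv n B (pCons a p) v + mvv n B q v"
    using B v q by (auto simp: mvv_pCons mult_add_distrib_mat_vec intro!: eq_vecI simp: algebra_simps)
  finally show ?case .
qed

lemma mvv_smult: assumes B: "B \<in> carrier_mat n n" and v: "v \<in> carrier_vec n"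
  shows "mvv n B (Polynomial.smult r p) v = r \<cdot>\<^sub>v mvv n B p v"
proof (induction p rule: pCons_induct)
  case 0
  then show ?case using B v by auto
next
  case (pCons a p)
  then show ?case using B v 
    by (auto simp: mvv_pCons mult_mat_vec smult_add_distrib_vec[of _ n] intro!: eq_vecI simp: algebra_simps)
qed

lemma mvv_mult: assumes B: "B \<in> carrier_mat n n" and v: "v \<in> carrier_vec n"
  shows "mvv n B (p * q) v = mvv n B p (mvv n B q v)"
proof (induction p rule: pCons_induct)
  case 0
  then show ?case using B v by auto
next
  case (pCons a p)
  have "mvv n B (pCons a p * q) v = mvv n B (Polynomial.smult a q) v + mvv n B (pCons 0 (p * q)) v"
    by (simp add: mvv_add[OF B v])
  also have "\<dots> = mvv n B (pCons a p) (mvv n B q v)"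
    using pCons.IH B v by (auto simp: mvv_pCons mvv_smult intro!: eq_vecI)
  finally show ?case .
qed

lemma mvv_one: assumes B: "B \<in> carrier_mat n n" and v: "v \<in> carrier_vec n"
  shows "mvv n B 1 v = v"
  using mvv_pCons[OF B v, of 1 0] B v by (auto simp: one_pCons intro!: eq_vecI)

lemma mvv_comm: assumes B: "B \<in> carrier_mat n n" and v: "v \<in> carrier_vec n"
  shows "B *\<^sub>v mvv n B p v = mvv n B p (B *\<^sub>v v)"
proof (induction p rule: pCons_induct)
  case 0
  then show ?case using B v by auto
next
  case (pCons a p)
  then show ?case using B v
    by (auto simp: mvv_pCons mult_add_distrib_mat_vec[of B n n] mult_mat_vec)
qed

lemma mvv_sum: assumes B: "B \<in> carrier_mat n n" and i: "i < n"
  shows "v \<in> carrier_vec n \<Longrightarrow> degree p < K \<Longrightarrow>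
    mvv n B p v $ i = (\<Sum>k<K. coeff p k * (((*\<^sub>v) B ^^ k) v) $ i)"
proof (induction p arbitrary: v K rule: pCons_induct)
  case 0
  then show ?case using i by simp
next
  case (pCons a p)
  from pCons.prems obtain K' where K: "K = Suc K'" by (cases K) auto
  have Bv: "B *\<^sub>v v \<in> carrier_vec n" using B pCons.prems by auto
  have e: "mvv n B (pCons a p) v = a \<cdot>\<^sub>v v + mvv n B p (B *\<^sub>v v)"
    using B pCons.prems by (simp add: mvv_pCons mvv_comm)
  have d: "dim_vec (mvv n B p (B *\<^sub>v v)) = n" using mvv_carrier[OF B Bv] by auto
  have "mvv n B (pCons a p) v $ i = a * v $ i + mvv n B p (B *\<^sub>v v) $ i"
    unfolding e using i d pCons.prems(1) by simp
  also have "mvv n B p (B *\<^sub>v v) $ i = (\<Sum>k<K'. coeff p k * (((*\<^sub>v) B ^^ k) (B *\<^sub>v v)) $ i)"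
  proof (cases "p = 0")
    case True
    then show ?thesis using i by simp
  next
    case False
    then show ?thesis using pCons.IH[OF Bv] pCons.prems K by simp
  qed
  also have "a * v $ i + \<dots> = (\<Sum>k<K. coeff (pCons a p) k * (((*\<^sub>v) B ^^ k) v) $ i)"
    unfolding K sum.lessThan_Suc_shift by (simp add: funpow_Suc_right del: funpow.simps)
  finally show ?case .
qed

lemma coeff_mult_X: "coeff ((p :: 'a :: field poly) * [:0, 1:]) k = (if k = 0 then 0 else coeff p (k - 1))"
  by (cases k) (auto simp: mult_pCons_right coeff_pCons)

lemma coeff_mult_const: "coeff (p * [:c:]) k = c * coeff p k"
  by (simp add: mult.commute)

lemma cayley_hamilton_vec: assumes B: "B \<in> carrier_mat n n" and v: "v \<in> carrier_vec n"
  shows "mvv n B (char_poly B) v = 0\<^sub>v n"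
proof (rule eq_vecI)
  show "dim_vec (mvv n B (char_poly B) v) = dim_vec (0\<^sub>v n)" using B v by simp
  fix i assume "i < dim_vec (0\<^sub>v n)"
  then have i: "i < n" by simp
  define M where "M = char_poly_matrix B"
  define P where "P = adj_mat M"
  define \<chi> where "\<chi> = char_poly B"
  define w where "w k = ((*\<^sub>v) B ^^ k) v" for k
  have M: "M \<in> carrier_mat n n" using B by (simp add: M_def)
  have P: "P \<in> carrier_mat n n" using adj_mat(1)[OF M] by (simp add: P_def)
  have PM: "P * M = \<chi> \<cdot>\<^sub>m 1\<^sub>m n" using adj_mat(3)[OF M] by (simp add: P_def \<chi>_def char_poly_def M_def)
  have Ment: "M $$ (m,l) = (if m = l then [:0,1:] else 0) + [:- B$$(m,l):]" if "m < n" "l < n" for m l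
    using B that by (simp add: M_def char_poly_matrix_def)
  have wc: "w k \<in> carrier_vec n" for k
    by (induction k) (use B v in \<open>auto simp: w_def\<close>)
  have wd: "dim_vec (w k) = n" for k using wc[of k] by auto
  have wS: "w (Suc k) = B *\<^sub>v w k" for k by (simp add: w_def)
  define g where "g k = (\<Sum>m<n. (if k = 0 then 0 else coeff (P $$ (i,m)) (k - 1)) * w k $ m)" for k
  have step: "coeff \<chi> k * w k $ i = g k - g (Suc k)" for k
  proof -
    have sumeq: "(\<Sum>m<n. P $$ (i,m) * M $$ (m,l)) = (if i = l then \<chi> else 0)" if l: "l < n" for l
    proof -
      have "(P * M) $$ (i,l) = (\<Sum>m<n. P $$ (i,m) * M $$ (m,l))"
        using P M i l by (simp add: scalar_prod_def lessThan_atLeast0)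
      then show ?thesis using PM i l by (cases "i = l") auto
    qed
    have ceq: "(if k = 0 then 0 else coeff (P $$ (i,l)) (k - 1)) - (\<Sum>m<n. B $$ (m,l) * coeff (P $$ (i,m)) k)
        = (if i = l then coeff \<chi> k else 0)" if l: "l < n" for l
    proof -
      have "coeff (\<Sum>m<n. P $$ (i,m) * M $$ (m,l)) k =
          (\<Sum>m<n. (if m = l then coeff (P $$ (i,m) * [:0,1:]) k else 0) - B $$ (m,l) * coeff (P $$ (i,m)) k)"
        unfolding coeff_sum
        by (rule sum.cong, simp, subst Ment, insert l, auto simp: distrib_left coeff_mult_const)
      also have "\<dots> = (if k = 0 then 0 else coeff (P $$ (i,l)) (k - 1)) - (\<Sum>m<n. B $$ (m,l) * coeff (P $$ (i,m)) k)"
        using l by (simp add: sum_subtractf coeff_mult_X coeff_pCons split: nat.splits)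
      finally have cc: "coeff (\<Sum>m<n. P $$ (i,m) * M $$ (m,l)) k = (if k = 0 then 0 else coeff (P $$ (i,l)) (k - 1)) - (\<Sum>m<n. B $$ (m,l) * coeff (P $$ (i,m)) k)" .
      have c2: "coeff (\<Sum>m<n. P $$ (i,m) * M $$ (m,l)) k = (if i = l then coeff \<chi> k else 0)" using sumeq[OF l] by simp
      show ?thesis using cc c2 by simp
    qed
    have "(\<Sum>l<n. (if i = l then coeff \<chi> k else 0) * w k $ l) = (\<Sum>l<n. if i = l then coeff \<chi> k * w k $ l else 0)"
      by (rule sum.cong) auto
    then have "coeff \<chi> k * w k $ i = (\<Sum>l<n. (if i = l then coeff \<chi> k else 0) * w k $ l)"
      using i by simp
    also have "\<dots> = (\<Sum>l<n. ((if k = 0 then 0 else coeff (P $$ (i,l)) (k - 1)) - (\<Sum>m<n. B $$ (m,l) * coeff (P $$ (i,m)) k)) * w k $ l)"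
      by (rule sum.cong, simp, subst ceq, auto)
    also have "\<dots> = g k - (\<Sum>l<n. \<Sum>m<n. B $$ (m,l) * coeff (P $$ (i,m)) k * w k $ l)"
      by (simp add: g_def left_diff_distrib sum_subtractf sum_distrib_right)
    also have "(\<Sum>l<n. \<Sum>m<n. B $$ (m,l) * coeff (P $$ (i,m)) k * w k $ l) = g (Suc k)"
    proof -
      have "g (Suc k) = (\<Sum>m<n. coeff (P $$ (i,m)) k * (\<Sum>l<n. B $$ (m,l) * w k $ l))"
        unfolding g_def wS using B wd by (intro sum.cong) (auto simp: scalar_prod_def lessThan_atLeast0 intro!: sum.cong)
      also have "\<dots> = (\<Sum>m<n. \<Sum>l<n. B $$ (m,l) * coeff (P $$ (i,m)) k * w k $ l)"
        by (simp add: sum_distrib_left mult_ac)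
      finally show ?thesis by (subst sum.swap) simp
    qed
    finally show ?thesis .
  qed
  define D where "D = (\<Sum>m<n. degree (P $$ (i,m)))"
  define K where "K = D + n + 2"
  have degchi: "degree \<chi> = n" using degree_monic_char_poly[OF B] by (simp add: \<chi>_def)
  have "mvv n B \<chi> v $ i = (\<Sum>k<K. coeff \<chi> k * w k $ i)"
    unfolding w_def by (rule mvv_sum[OF B i v]) (simp add: degchi K_def)
  also have "\<dots> = (\<Sum>k<K. g k - g (Suc k))" using step by simp
  also have "\<dots> = g 0 - g K" by (rule sum_lessThan_telescope')
  also have "g K = 0"
  proof -
    have "coeff (P $$ (i,m)) (K - 1) = 0" if "m < n" for m
    proof (rule coeff_eq_0)
      have "degree (P $$ (i,m)) \<le> D" unfolding D_def
        by (rule member_le_sum) (use that in auto)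
      then show "degree (P $$ (i,m)) < K - 1" by (simp add: K_def)
    qed
    then show ?thesis by (simp add: g_def K_def)
  qed
  finally show "mvv n B (char_poly B) v $ i = 0\<^sub>v n $ i" using i by (simp add: g_def \<chi>_def)
qed

lemma pow_mat_vec_funpow: assumes B: "B \<in> carrier_mat n n"
  shows "v \<in> carrier_vec n \<Longrightarrow> B ^\<^sub>m k *\<^sub>v v = ((*\<^sub>v) B ^^ k) v"
proof (induction k arbitrary: v)
  case 0
  then show ?case using B by auto
next
  case (Suc k)
  have "B ^\<^sub>m Suc k *\<^sub>v v = B ^\<^sub>m k *\<^sub>v (B *\<^sub>v v)"
    using B Suc.prems by (simp add: assoc_mult_mat_vec[of _ n n B n])
  also have "\<dots> = ((*\<^sub>v) B ^^ k) (B *\<^sub>v v)"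
    using Suc.IH[of "B *\<^sub>v v"] B Suc.prems by simp
  finally show ?case by (simp add: funpow_Suc_right del: funpow.simps)
qed

lemma SI_iff: assumes B: "B \<in> carrier_mat n n" and n: "n \<ge> 1"
  shows "strongly_independent_tuple n (\<lambda>i. B ^\<^sub>m i) \<longleftrightarrow>
    (\<forall>v\<in>carrier_vec n. v \<noteq> 0\<^sub>v n \<longrightarrow> (\<forall>p. p \<noteq> 0 \<longrightarrow> degree p < n \<longrightarrow> mvv n B p v \<noteq> 0\<^sub>v n))"
proof
  assume SI: "strongly_independent_tuple n (\<lambda>i. B ^\<^sub>m i)"
  show "\<forall>v\<in>carrier_vec n. v \<noteq> 0\<^sub>v n \<longrightarrow> (\<forall>p. p \<noteq> 0 \<longrightarrow> degree p < n \<longrightarrow> mvv n B p v \<noteq> 0\<^sub>v n)"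
  proof (intro ballI impI allI notI)
    fix v p assume v: "v \<in> carrier_vec n" and v0: "v \<noteq> 0\<^sub>v n" and p0: "p \<noteq> 0"
      and dp: "degree p < n" and z: "mvv n B p v = 0\<^sub>v n"
    have "\<forall>j<n. (\<Sum>i<n. coeff p i * (B ^\<^sub>m i *\<^sub>v v) $ j) = 0"
    proof (intro allI impI)
      fix j assume j: "j < n"
      have "(\<Sum>i<n. coeff p i * (B ^\<^sub>m i *\<^sub>v v) $ j) = mvv n B p v $ j"
        using mvv_sum[OF B j v dp] pow_mat_vec_funpow[OF B v] by simp
      then show "(\<Sum>i<n. coeff p i * (B ^\<^sub>m i *\<^sub>v v) $ j) = 0" using z j by simp
    qed
    then have "\<forall>i<n. coeff p i = 0" using SI v v0 unfolding strongly_independent_tuple_def by blast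
    then have "p = 0"
      by (intro poly_eqI) (metis coeff_0 coeff_eq_0 dp linorder_not_less order.strict_trans1)
    then show False using p0 by simp
  qed
next
  assume H: "\<forall>v\<in>carrier_vec n. v \<noteq> 0\<^sub>v n \<longrightarrow> (\<forall>p. p \<noteq> 0 \<longrightarrow> degree p < n \<longrightarrow> mvv n B p v \<noteq> 0\<^sub>v n)"
  show "strongly_independent_tuple n (\<lambda>i. B ^\<^sub>m i)"
    unfolding strongly_independent_tuple_def
  proof (intro ballI impI allI)
    fix v :: "'a vec" and c :: "nat \<Rightarrow> 'a" and i
    assume v: "v \<in> carrier_vec n" and v0: "v \<noteq> 0\<^sub>v n"
      and sums: "\<forall>j<n. (\<Sum>i<n. c i * (B ^\<^sub>m i *\<^sub>v v) $ j) = 0" and i: "i < n"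
    define p where "p = (\<Sum>i<n. monom (c i) i)"
    have cp: "coeff p k = (if k < n then c k else 0)" for k
    proof -
      have "coeff p k = (\<Sum>i<n. if i = k then c i else 0)"
        unfolding p_def coeff_sum by (simp add: coeff_monom)
      then show ?thesis by (simp add: sum.delta')
    qed
    have dp: "degree p < n"
    proof -
      have "degree p \<le> n - 1" by (rule degree_le) (use n in \<open>auto simp: cp\<close>)
      then show ?thesis using n by simp
    qed
    have "mvv n B p v = 0\<^sub>v n"
    proof (rule eq_vecI)
      show "dim_vec (mvv n B p v) = dim_vec (0\<^sub>v n)" using B v by simp
      fix j assume "j < dim_vec (0\<^sub>v n)"
      then have j: "j < n" by simp
      have "mvv n B p v $ j = (\<Sum>i<n. c i * (B ^\<^sub>m i *\<^sub>v v) $ j)"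
        using mvv_sum[OF B j v dp] pow_mat_vec_funpow[OF B v] by (simp add: cp)
      then show "mvv n B p v $ j = 0\<^sub>v n $ j" using sums j by simp
    qed
    then have "p = 0" using H v v0 dp by blast
    then show "c i = 0" using cp[of i] i by simp
  qed
qed

theorem theorem1p5:
  fixes B :: "'a::field mat" and n :: nat
  assumes "n \<ge> 1" and "B \<in> carrier_mat n n" and "B \<noteq> 0\<^sub>m n n"
  shows "strongly_independent_mat n B \<longleftrightarrow> irreducible (char_poly B)"
proof -
  note n = assms(1) and B = assms(2)
  define \<chi> where "\<chi> = char_poly B"
  have degchi: "degree \<chi> = n" using degree_monic_char_poly[OF B] by (simp add: \<chi>_def)
  have chi0: "\<chi> \<noteq> 0" using degchi n by auto
  have CH: "mvv n B \<chi> v = 0\<^sub>v n" if "v \<in> carrier_vec n" for v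
    using cayley_hamilton_vec[OF B that] by (simp add: \<chi>_def)
  have "strongly_independent_mat n B \<longleftrightarrow>
    (\<forall>v\<in>carrier_vec n. v \<noteq> 0\<^sub>v n \<longrightarrow> (\<forall>p. p \<noteq> 0 \<longrightarrow> degree p < n \<longrightarrow> mvv n B p v \<noteq> 0\<^sub>v n))"
    unfolding strongly_independent_mat_def using SI_iff[OF B n] assms(3) by simp
  also have "\<dots> \<longleftrightarrow> irreducible \<chi>"
  proof
    assume H: "\<forall>v\<in>carrier_vec n. v \<noteq> 0\<^sub>v n \<longrightarrow> (\<forall>p. p \<noteq> 0 \<longrightarrow> degree p < n \<longrightarrow> mvv n B p v \<noteq> 0\<^sub>v n)"
    show "irreducible \<chi>"
    proof (rule Factorial_Ring.irreducibleI)
      show "\<chi> \<noteq> 0" by (rule chi0)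
      show "\<not> is_unit \<chi>" using is_unit_iff_degree[OF chi0] degchi n by simp
      fix f g assume fg: "\<chi> = f * g"
      show "is_unit f \<or> is_unit g"
      proof (rule ccontr)
        assume nu: "\<not> (is_unit f \<or> is_unit g)"
        have f0: "f \<noteq> 0" and g0: "g \<noteq> 0" using fg chi0 by auto
        have df: "degree f \<ge> 1" using nu is_unit_iff_degree[OF f0] by auto
        have dg: "degree g \<ge> 1" using nu is_unit_iff_degree[OF g0] by auto
        have "degree \<chi> = degree f + degree g" using fg f0 g0 by (simp add: degree_mult_eq)
        then have dfn: "degree f < n" and dgn: "degree g < n" using df dg degchi by auto
        define v :: "'a vec" where "v = unit_vec n 0"
        have v: "v \<in> carrier_vec n" by (simp add: v_def)
        have v0: "v \<noteq> 0\<^sub>v n"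
        proof
          assume "v = 0\<^sub>v n"
          then have "v $ 0 = 0" using n by simp
          then show False using n by (simp add: v_def)
        qed
        have w0: "mvv n B g v \<noteq> 0\<^sub>v n" using H v v0 g0 dgn by blast
        have "mvv n B f (mvv n B g v) = 0\<^sub>v n"
          using mvv_mult[OF B v, of f g] fg CH[OF v] by simp
        then show False using H mvv_carrier[OF B v, of g] w0 f0 dfn by blast
      qed
    qed
  next
    assume irr: "irreducible \<chi>"
    show "\<forall>v\<in>carrier_vec n. v \<noteq> 0\<^sub>v n \<longrightarrow> (\<forall>p. p \<noteq> 0 \<longrightarrow> degree p < n \<longrightarrow> mvv n B p v \<noteq> 0\<^sub>v n)"
    proof (intro ballI impI allI notI)
      fix v p assume v: "v \<in> carrier_vec n" and v0: "v \<noteq> 0\<^sub>v n" and p0: "p \<noteq> 0"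
        and dp: "degree p < n" and z: "mvv n B p v = 0\<^sub>v n"
      define J where "J = {q. q \<noteq> 0 \<and> mvv n B q v = 0\<^sub>v n}"
      have pJ: "p \<in> J" using p0 z by (simp add: J_def)
      obtain d where dJ: "d \<in> J" and dmin: "\<And>q. q \<in> J \<Longrightarrow> degree d \<le> degree q"
        using ex_has_least_nat[of "\<lambda>q. q \<in> J" p degree] pJ by blast
      have d0: "d \<noteq> 0" and dz: "mvv n B d v = 0\<^sub>v n" using dJ by (auto simp: J_def)
      have mvvc: "mvv n B q v \<in> carrier_vec n" for q using B v by simp
      have "\<chi> mod d = 0"
      proof (rule ccontr)
        assume nz: "\<chi> mod d \<noteq> 0"
        have "\<chi> mod d = \<chi> - (\<chi> div d) * d" by (simp add: mod_div_mult_eq minus_div_mult_eq_mod)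
        then have "mvv n B (\<chi> mod d) v = mvv n B \<chi> v + mvv n B (- ((\<chi> div d) * d)) v"
          using mvv_add[OF B v, of \<chi> "- ((\<chi> div d) * d)"] by simp
        also have "mvv n B (- ((\<chi> div d) * d)) v = (-1) \<cdot>\<^sub>v mvv n B (\<chi> div d) (mvv n B d v)"
          using mvv_smult[OF B v, of "-1" "(\<chi> div d) * d"] mvv_mult[OF B v, of "\<chi> div d" d] by simp
        also have "\<dots> = 0\<^sub>v n" using dz mvv_zero_vec[OF B] by auto
        finally have "mvv n B (\<chi> mod d) v = 0\<^sub>v n" using CH[OF v] by simp
        then have "\<chi> mod d \<in> J" using nz by (simp add: J_def)
        then have "degree d \<le> degree (\<chi> mod d)" by (rule dmin)
        moreover have "degree (\<chi> mod d) < degree d" by (rule degree_mod_less'[OF d0 nz])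
        ultimately show False by simp
      qed
      then have "d dvd \<chi>" by (simp add: mod_eq_0_iff_dvd)
      then obtain e where de: "\<chi> = d * e" by (elim dvdE)
      have "\<not> is_unit d"
      proof
        assume "is_unit d"
        then obtain k where k: "1 = d * k" by (elim dvdE)
        have "v = mvv n B 1 v" using mvv_one[OF B v] by simp
        also have "\<dots> = mvv n B k (mvv n B d v)" unfolding k mult.commute[of d k] by (rule mvv_mult[OF B v])
        also have "\<dots> = 0\<^sub>v n" using dz mvv_zero_vec[OF B] by simp
        finally show False using v0 by simp
      qed
      then have ue: "is_unit e" using irr de by (auto dest: irreducibleD)
      have e0: "e \<noteq> 0" using de chi0 by auto
      have "degree e = 0" using ue is_unit_iff_degree[OF e0] by simp
      then have "degree \<chi> = degree d" using de d0 e0 by (simp add: degree_mult_eq)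
      moreover have "degree d \<le> degree p" by (rule dmin[OF pJ])
      ultimately show False using degchi dp by simp
    qed
  qed
  finally show ?thesis by (simp add: \<chi>_def)
qed

end
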